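(* Let $F$ be a Finsler function on a two-dimensional manifold $M$, written on the region $y^1\neq0$ as $F=|y^1|f(x,u)$ with $u=y^2/y^1$, and let $\sigma$ be a smooth function on $M$. Put $Q=\frac{f'}{f-uf'}$ and let $\overline F=e^{\sigma(x)}F=|y^1|\overline f(x,u)$ with $\overline f=e^{\sigma}f$, $\overline Q=\frac{\overline f'}{\overline f-u\overline f'}$. Then $$\overline f_1'''+\overline Q\,\overline f_2'''=f_1'''+Qf_2'''+\frac{2\sigma_1QQ'Q'''-3\sigma_1Q''^2Q-2\sigma_2Q'Q'''+3\sigma_2Q''^2}{2Q'^2},$$ where $\overline f_1,\overline f_2$ are the functions $f_1,f_2$ computed from $\overline f$ in place of $f$.
   Context: Coordinates $(x^1,x^2)$ on $M$, $(x^i,y^i)$ on $TM$; $\partial_i=\partial/\partial x^i$; primes denote derivatives with respect to $u$; $\sigma_i=\partial\sigma/\partial x^i$. The functions $f_1,f_2$ are defined by $f_1=\frac{(\partial_1f+u\partial_2f)f''-(\partial_1f'+u\partial_2f'-\partial_2f)f'}{2ff''}$ and $f_2=\frac{u(\partial_1f+u\partial_2f)f''+(\partial_1f'+u\partial_2f'-\partial_2f)(f-uf')}{2ff''}$; they satisfy $G^1=f_1(y^1)^2$, $G^2=f_2(y^1)^2$ for the geodesic spray coefficients $G^i$ of $F$. For a Finsler surface one has $f''\neq0$ and $Q'=\frac{ff''}{(f-uf')^2}\neq0$. *)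

theory Defs
  imports "HOL-Analysis.Analysis"
begin

text \<open>Points of the coordinate domain are triples (x1, x2, u) with u = y2/y1.
  Partial derivatives with respect to x1, x2 and u.\<close>

definition D1 :: "(real \<times> real \<times> real \<Rightarrow> real) \<Rightarrow> real \<times> real \<times> real \<Rightarrow> real" where
  "D1 g = (\<lambda>(a, b, c). deriv (\<lambda>t. g (t, b, c)) a)"

definition D2 :: "(real \<times> real \<times> real \<Rightarrow> real) \<Rightarrow> real \<times> real \<times> real \<Rightarrow> real" where
  "D2 g = (\<lambda>(a, b, c). deriv (\<lambda>t. g (a, t, c)) b)"

definition Du :: "(real \<times> real \<times> real \<Rightarrow> real) \<Rightarrow> real \<times> real \<times> real \<Rightarrow> real" where
  "Du g = (\<lambda>(a, b, c). deriv (\<lambda>t. g (a, b, t)) c)"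

coinductive smooth3 :: "(real \<times> real \<times> real) set \<Rightarrow> (real \<times> real \<times> real \<Rightarrow> real) \<Rightarrow> bool"
  for U where
  "\<lbrakk> continuous_on U g;
     \<forall>a b c. (a, b, c) \<in> U \<longrightarrow>
        (\<lambda>t. g (t, b, c)) differentiable (at a) \<and>
        (\<lambda>t. g (a, t, c)) differentiable (at b) \<and>
        (\<lambda>t. g (a, b, t)) differentiable (at c);
     smooth3 U (D1 g); smooth3 U (D2 g); smooth3 U (Du g) \<rbrakk> \<Longrightarrow> smooth3 U g"

definition ucoord :: "real \<times> real \<times> real \<Rightarrow> real" where
  "ucoord p = snd (snd p)"

definition f1 :: "(real \<times> real \<times> real \<Rightarrow> real) \<Rightarrow> real \<times> real \<times> real \<Rightarrow> real" where
  "f1 f = (\<lambda>p. let u = ucoord p in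
     ((D1 f p + u * D2 f p) * Du (Du f) p
      - (D1 (Du f) p + u * D2 (Du f) p - D2 f p) * Du f p)
     / (2 * f p * Du (Du f) p))"

definition f2 :: "(real \<times> real \<times> real \<Rightarrow> real) \<Rightarrow> real \<times> real \<times> real \<Rightarrow> real" where
  "f2 f = (\<lambda>p. let u = ucoord p in
     (u * (D1 f p + u * D2 f p) * Du (Du f) p
      + (D1 (Du f) p + u * D2 (Du f) p - D2 f p) * (f p - u * Du f p))
     / (2 * f p * Du (Du f) p))"

definition Qf :: "(real \<times> real \<times> real \<Rightarrow> real) \<Rightarrow> real \<times> real \<times> real \<Rightarrow> real" where
  "Qf f = (\<lambda>p. Du f p / (f p - ucoord p * Du f p))"

definition conf :: "(real \<times> real \<Rightarrow> real) \<Rightarrow> (real \<times> real \<times> real \<Rightarrow> real) \<Rightarrow> real \<times> real \<times> real \<Rightarrow> real" where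
  "conf \<sigma> f = (\<lambda>(a, b, c). exp (\<sigma> (a, b)) * f (a, b, c))"

definition sig1 :: "(real \<times> real \<Rightarrow> real) \<Rightarrow> real \<times> real \<Rightarrow> real" where
  "sig1 \<sigma> = (\<lambda>(a, b). deriv (\<lambda>t. \<sigma> (t, b)) a)"

definition sig2 :: "(real \<times> real \<Rightarrow> real) \<Rightarrow> real \<times> real \<Rightarrow> real" where
  "sig2 \<sigma> = (\<lambda>(a, b). deriv (\<lambda>t. \<sigma> (a, t)) b)"

end

theory Submission
  imports Defs
begin

fun cn :: "real set \<Rightarrow> nat \<Rightarrow> (real \<Rightarrow> real) \<Rightarrow> bool" where
  "cn I 0 g = (\<forall>t\<in>I. (g has_real_derivative deriv g t) (at t))"
| "cn I (Suc n) g = ((\<forall>t\<in>I. (g has_real_derivative deriv g t) (at t)) \<and> cn I n (deriv g))"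

lemma hasd: "(g has_real_derivative D) (at t) \<Longrightarrow> (g has_real_derivative deriv g t) (at t)"
  by (metis DERIV_imp_deriv)

lemma cn_D: "cn I n g \<Longrightarrow> t \<in> I \<Longrightarrow> (g has_real_derivative deriv g t) (at t)"
  by (cases n) auto

lemma cn_mono: "cn I (Suc n) g \<Longrightarrow> cn I n g"
  by (induction n arbitrary: g) auto

lemma deriv_congI: "open I \<Longrightarrow> t \<in> I \<Longrightarrow> (\<And>s. s \<in> I \<Longrightarrow> g s = h s) \<Longrightarrow> deriv g t = deriv h t"
  by (rule deriv_cong_ev) (auto simp: eventually_nhds intro!: exI[of _ I])

lemma cn_cong: "open I \<Longrightarrow> cn I n g \<Longrightarrow> (\<And>t. t \<in> I \<Longrightarrow> g t = h t) \<Longrightarrow> cn I n h"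
proof (induction n arbitrary: g h)
  case 0
  then show ?case
    by (auto intro: has_field_derivative_transform_within_open simp: deriv_congI[of I _ h g])
next
  case (Suc n)
  have d: "\<And>t. t \<in> I \<Longrightarrow> deriv g t = deriv h t" using Suc.prems by (intro deriv_congI) auto
  have "cn I n (deriv h)" using Suc.IH[of "deriv g" "deriv h"] Suc.prems d by auto
  moreover have "\<forall>t\<in>I. (h has_real_derivative deriv h t) (at t)"
    using Suc.prems d by (auto intro: has_field_derivative_transform_within_open)
  ultimately show ?case by simp
qed

lemma cn_const: "cn I n (\<lambda>t. c)"
  by (induction n arbitrary: c) auto

lemma cn_id: "cn I n (\<lambda>t. t)"
  by (cases n) (auto simp: cn_const)

lemma cn_add: "open I \<Longrightarrow> cn I n g \<Longrightarrow> cn I n h \<Longrightarrow> cn I n (\<lambda>t. g t + h t)"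
proof (induction n arbitrary: g h)
  case 0
  then show ?case by (auto intro!: hasd derivative_intros)
next
  case (Suc n)
  have D: "\<And>t. t \<in> I \<Longrightarrow> ((\<lambda>t. g t + h t) has_real_derivative deriv g t + deriv h t) (at t)"
    using Suc.prems by (auto intro!: derivative_eq_intros)
  hence d: "\<And>t. t \<in> I \<Longrightarrow> deriv (\<lambda>t. g t + h t) t = deriv g t + deriv h t"
    by (rule DERIV_imp_deriv)
  have "cn I n (\<lambda>t. deriv g t + deriv h t)" using Suc by auto
  hence "cn I n (deriv (\<lambda>t. g t + h t))" by (rule cn_cong[OF Suc.prems(1)]) (simp add: d)
  then show ?case using D d by (simp only: cn.simps) simp
qed

lemma cn_mult: "open I \<Longrightarrow> cn I n g \<Longrightarrow> cn I n h \<Longrightarrow> cn I n (\<lambda>t. g t * h t)"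
proof (induction n arbitrary: g h)
  case 0
  then show ?case by (auto intro!: hasd derivative_intros)
next
  case (Suc n)
  have D: "\<And>t. t \<in> I \<Longrightarrow> ((\<lambda>t. g t * h t) has_real_derivative deriv g t * h t + g t * deriv h t) (at t)"
    using Suc.prems by (auto intro!: derivative_eq_intros)
  hence d: "\<And>t. t \<in> I \<Longrightarrow> deriv (\<lambda>t. g t * h t) t = deriv g t * h t + g t * deriv h t"
    by (rule DERIV_imp_deriv)
  have c1: "cn I n (\<lambda>t. deriv g t * h t)"
    by (rule Suc.IH) (use Suc.prems cn_mono in auto)
  have c2: "cn I n (\<lambda>t. g t * deriv h t)"
    by (rule Suc.IH) (use Suc.prems cn_mono in auto)
  have "cn I n (\<lambda>t. deriv g t * h t + g t * deriv h t)"
    by (rule cn_add[OF Suc.prems(1) c1 c2])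
  hence "cn I n (deriv (\<lambda>t. g t * h t))" by (rule cn_cong[OF Suc.prems(1)]) (simp add: d)
  then show ?case using D d by (simp only: cn.simps) simp
qed

lemma cn_inverse: "open I \<Longrightarrow> cn I n g \<Longrightarrow> (\<And>t. t \<in> I \<Longrightarrow> g t \<noteq> 0) \<Longrightarrow> cn I n (\<lambda>t. inverse (g t))"
proof (induction n arbitrary: g)
  case 0
  then show ?case by (auto intro!: hasd derivative_intros)
next
  case (Suc n)
  have D: "\<And>t. t \<in> I \<Longrightarrow> ((\<lambda>t. inverse (g t)) has_real_derivative (-1) * deriv g t * (inverse (g t) * inverse (g t))) (at t)"
  proof -
    fix t assume t: "t \<in> I"
    have "((\<lambda>t. inverse (g t)) has_real_derivative - (deriv g t * inverse (g t ^ Suc (Suc 0)))) (at t)"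
      by (rule DERIV_inverse_fun) (use Suc.prems t in auto)
    moreover have "- (deriv g t * inverse (g t ^ Suc (Suc 0))) = (-1) * deriv g t * (inverse (g t) * inverse (g t))"
      using Suc.prems(3)[OF t] by (simp add: power2_eq_square divide_inverse)
    ultimately show "((\<lambda>t. inverse (g t)) has_real_derivative (-1) * deriv g t * (inverse (g t) * inverse (g t))) (at t)" by simp
  qed
  hence d: "\<And>t. t \<in> I \<Longrightarrow> deriv (\<lambda>t. inverse (g t)) t = (-1) * deriv g t * (inverse (g t) * inverse (g t))"
    by (rule DERIV_imp_deriv)
  have "cn I n (\<lambda>t. (-1) * deriv g t * (inverse (g t) * inverse (g t)))"
  proof -
    have "cn I n (\<lambda>t. inverse (g t))" by (rule Suc.IH) (use Suc.prems cn_mono in auto)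
    moreover have "cn I n (deriv g)" using Suc.prems by simp
    ultimately show ?thesis using Suc.prems(1) by (intro cn_mult cn_const)
  qed
  hence "cn I n (deriv (\<lambda>t. inverse (g t)))" by (rule cn_cong[OF Suc.prems(1)]) (simp add: d)
  then show ?case using D d by (simp only: cn.simps) simp
qed

lemma cn_diff: "open I \<Longrightarrow> cn I n g \<Longrightarrow> cn I n h \<Longrightarrow> cn I n (\<lambda>t. g t - h t)"
  using cn_add[of I n g "\<lambda>t. (-1) * h t"] cn_mult[of I n "\<lambda>t. -1" h] cn_const
  by (auto elim: cn_cong)

lemma cn_divide: "open I \<Longrightarrow> cn I n g \<Longrightarrow> cn I n h \<Longrightarrow> (\<And>t. t \<in> I \<Longrightarrow> h t \<noteq> 0) \<Longrightarrow> cn I n (\<lambda>t. g t / h t)"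
  using cn_mult[of I n g "\<lambda>t. inverse (h t)"] cn_inverse[of I n h]
  by (auto elim: cn_cong simp: divide_inverse)

lemma cn_deriv: "cn I (Suc n) g \<Longrightarrow> cn I n (deriv g)" by simp

lemma d3_add:
  assumes I: "open I" and g: "cn I 2 g" and h: "cn I 2 h" and t: "t \<in> I"
  shows "deriv (deriv (deriv (\<lambda>t. g t + h t))) t
       = deriv (deriv (deriv g)) t + deriv (deriv (deriv h)) t"
proof -
  have g0: "\<And>s. s \<in> I \<Longrightarrow> (g has_real_derivative deriv g s) (at s)"
   and g1: "\<And>s. s \<in> I \<Longrightarrow> (deriv g has_real_derivative deriv (deriv g) s) (at s)"
   and g2: "\<And>s. s \<in> I \<Longrightarrow> (deriv (deriv g) has_real_derivative deriv (deriv (deriv g)) s) (at s)"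
    using g by (auto simp: numeral_2_eq_2)
  have h0: "\<And>s. s \<in> I \<Longrightarrow> (h has_real_derivative deriv h s) (at s)"
   and h1: "\<And>s. s \<in> I \<Longrightarrow> (deriv h has_real_derivative deriv (deriv h) s) (at s)"
   and h2: "\<And>s. s \<in> I \<Longrightarrow> (deriv (deriv h) has_real_derivative deriv (deriv (deriv h)) s) (at s)"
    using h by (auto simp: numeral_2_eq_2)
  have e1: "\<And>s. s \<in> I \<Longrightarrow> deriv (\<lambda>t. g t + h t) s = deriv g s + deriv h s"
    by (rule DERIV_imp_deriv) (auto intro!: derivative_eq_intros g0 h0)
  have e2: "\<And>s. s \<in> I \<Longrightarrow> deriv (deriv (\<lambda>t. g t + h t)) s = deriv (deriv g) s + deriv (deriv h) s"
  proof -
    fix s assume s: "s \<in> I"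
    have "deriv (deriv (\<lambda>t. g t + h t)) s = deriv (\<lambda>s. deriv g s + deriv h s) s"
      using e1 I s by (intro deriv_congI) auto
    also have "\<dots> = deriv (deriv g) s + deriv (deriv h) s"
      by (rule DERIV_imp_deriv) (auto intro!: derivative_eq_intros g1 h1 s)
    finally show "?thesis s" .
  qed
  have "deriv (deriv (deriv (\<lambda>t. g t + h t))) t = deriv (\<lambda>s. deriv (deriv g) s + deriv (deriv h) s) t"
    using e2 I t by (intro deriv_congI) auto
  also have "\<dots> = deriv (deriv (deriv g)) t + deriv (deriv (deriv h)) t"
    by (rule DERIV_imp_deriv) (auto intro!: derivative_eq_intros g2 h2 t)
  finally show ?thesis .
qed

lemma leib:
  assumes I: "open I" and g: "cn I 2 g" and h: "cn I 2 h" and t: "t \<in> I"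
  shows "deriv (\<lambda>t. g t * h t) t = deriv g t * h t + g t * deriv h t"
    "deriv (deriv (\<lambda>t. g t * h t)) t = deriv (deriv g) t * h t + 2 * deriv g t * deriv h t + g t * deriv (deriv h) t"
    "deriv (deriv (deriv (\<lambda>t. g t * h t))) t
       = deriv (deriv (deriv g)) t * h t + 3 * deriv (deriv g) t * deriv h t
         + 3 * deriv g t * deriv (deriv h) t + g t * deriv (deriv (deriv h)) t"
proof -
  have g0: "\<And>s. s \<in> I \<Longrightarrow> (g has_real_derivative deriv g s) (at s)"
   and g1: "\<And>s. s \<in> I \<Longrightarrow> (deriv g has_real_derivative deriv (deriv g) s) (at s)"
   and g2: "\<And>s. s \<in> I \<Longrightarrow> (deriv (deriv g) has_real_derivative deriv (deriv (deriv g)) s) (at s)"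
    using g by (auto simp: numeral_2_eq_2)
  have h0: "\<And>s. s \<in> I \<Longrightarrow> (h has_real_derivative deriv h s) (at s)"
   and h1: "\<And>s. s \<in> I \<Longrightarrow> (deriv h has_real_derivative deriv (deriv h) s) (at s)"
   and h2: "\<And>s. s \<in> I \<Longrightarrow> (deriv (deriv h) has_real_derivative deriv (deriv (deriv h)) s) (at s)"
    using h by (auto simp: numeral_2_eq_2)
  have e1: "\<And>s. s \<in> I \<Longrightarrow> deriv (\<lambda>t. g t * h t) s = deriv g s * h s + g s * deriv h s"
    by (rule DERIV_imp_deriv) (auto intro!: derivative_eq_intros g0 h0)
  then show "deriv (\<lambda>t. g t * h t) t = deriv g t * h t + g t * deriv h t" using t .
  have e2: "\<And>s. s \<in> I \<Longrightarrow> deriv (deriv (\<lambda>t. g t * h t)) s = deriv (deriv g) s * h s + 2 * deriv g s * deriv h s + g s * deriv (deriv h) s"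
  proof -
    fix s assume s: "s \<in> I"
    have "deriv (deriv (\<lambda>t. g t * h t)) s = deriv (\<lambda>s. deriv g s * h s + g s * deriv h s) s"
      using e1 I s by (intro deriv_congI) auto
    also have "\<dots> = deriv (deriv g) s * h s + 2 * deriv g s * deriv h s + g s * deriv (deriv h) s"
      by (rule DERIV_imp_deriv) (auto intro!: derivative_eq_intros g0 h0 g1 h1 s simp: algebra_simps)
    finally show "?thesis s" .
  qed
  then show "deriv (deriv (\<lambda>t. g t * h t)) t = deriv (deriv g) t * h t + 2 * deriv g t * deriv h t + g t * deriv (deriv h) t" using t .
  have "deriv (deriv (deriv (\<lambda>t. g t * h t))) t = deriv (\<lambda>s. deriv (deriv g) s * h s + 2 * deriv g s * deriv h s + g s * deriv (deriv h) s) t"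
    using e2 I t by (intro deriv_congI) auto
  also have "\<dots> = deriv (deriv (deriv g)) t * h t + 3 * deriv (deriv g) t * deriv h t
         + 3 * deriv g t * deriv (deriv h) t + g t * deriv (deriv (deriv h)) t"
    by (rule DERIV_imp_deriv) (auto intro!: derivative_eq_intros g0 h0 g1 h1 g2 h2 t simp: algebra_simps)
  finally show "deriv (deriv (deriv (\<lambda>t. g t * h t))) t
       = deriv (deriv (deriv g)) t * h t + 3 * deriv (deriv g) t * deriv h t
         + 3 * deriv g t * deriv (deriv h) t + g t * deriv (deriv (deriv h)) t" .
qed

lemma d3_cong: "open I \<Longrightarrow> t \<in> I \<Longrightarrow> (\<And>s. s \<in> I \<Longrightarrow> g s = h s) \<Longrightarrow>
  deriv (deriv (deriv g)) t = deriv (deriv (deriv h)) t"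
  using higher_deriv_cong_ev[of g h t t 3]
  by (auto simp: eventually_nhds eval_nat_numeral intro!: exI[of _ I])

lemma lin3:
  assumes I: "open I" and a: "cn I 2 a" and b: "cn I 2 b" and t: "t \<in> I"
  shows "deriv (deriv (deriv (\<lambda>t. (c0 + c1 * t + c4 * (t * t)) + (c2 * a t + c3 * b t)))) t
     = c2 * deriv (deriv (deriv a)) t + c3 * deriv (deriv (deriv b)) t"
proof -
  have p1: "deriv (\<lambda>t. c0 + c1 * t + c4 * (t * t)) = (\<lambda>t. c1 + 2 * c4 * t)"
    by (rule ext, rule DERIV_imp_deriv) (auto intro!: derivative_eq_intros)
  have p2: "deriv (\<lambda>t. c1 + 2 * c4 * t) = (\<lambda>t. 2 * c4)"
    by (rule ext, rule DERIV_imp_deriv) (auto intro!: derivative_eq_intros)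
  have cp: "cn I 2 (\<lambda>t. c0 + c1 * t + c4 * (t * t))"
    by (intro cn_add cn_mult cn_const cn_id I)
  have cc: "\<And>c g. cn I 2 g \<Longrightarrow> cn I 2 (\<lambda>t. c * g t)"
    by (intro cn_mult cn_const I)
  have "deriv (deriv (deriv (\<lambda>t. (c0 + c1 * t + c4 * (t * t)) + (c2 * a t + c3 * b t)))) t
     = deriv (deriv (deriv (\<lambda>t. c0 + c1 * t + c4 * (t * t)))) t
       + deriv (deriv (deriv (\<lambda>t. c2 * a t + c3 * b t))) t"
    using d3_add[OF I cp _ t, of "\<lambda>t. c2 * a t + c3 * b t"] cn_add[OF I cc[OF a] cc[OF b]] by simp
  also have "deriv (deriv (deriv (\<lambda>t. c2 * a t + c3 * b t))) t
     = deriv (deriv (deriv (\<lambda>t. c2 * a t))) t + deriv (deriv (deriv (\<lambda>t. c3 * b t))) t"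
    using d3_add[OF I cc[OF a] cc[OF b] t] by simp
  also have "deriv (deriv (deriv (\<lambda>t. c2 * a t))) t = c2 * deriv (deriv (deriv a)) t"
    using leib(3)[OF I cn_const a t, of c2] by simp
  also have "deriv (deriv (deriv (\<lambda>t. c3 * b t))) t = c3 * deriv (deriv (deriv b)) t"
    using leib(3)[OF I cn_const b t, of c3] by simp
  finally show ?thesis by (simp add: p1 p2)
qed


lemma open_line3:
  assumes "open U"
  shows "open {t. (a, b, t) \<in> U}" "open {t. (t, b, c) \<in> U}" "open {t. (a, t, c) \<in> U}"
proof -
  have "open ((\<lambda>t. (a, b, t)) -` U)" by (rule open_vimage[OF assms]) (intro continuous_intros)
  then show "open {t. (a, b, t) \<in> U}" by (simp add: vimage_def)
  have "open ((\<lambda>t. (t, b, c)) -` U)" by (rule open_vimage[OF assms]) (intro continuous_intros)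
  then show "open {t. (t, b, c) \<in> U}" by (simp add: vimage_def)
  have "open ((\<lambda>t. (a, t, c)) -` U)" by (rule open_vimage[OF assms]) (intro continuous_intros)
  then show "open {t. (a, t, c) \<in> U}" by (simp add: vimage_def)
qed

lemma smooth3_D:
  assumes "smooth3 U g"
  shows "smooth3 U (D1 g)" "smooth3 U (D2 g)" "smooth3 U (Du g)"
    "\<And>a b c. (a, b, c) \<in> U \<Longrightarrow> (\<lambda>t. g (t, b, c)) differentiable (at a)"
    "\<And>a b c. (a, b, c) \<in> U \<Longrightarrow> (\<lambda>t. g (a, t, c)) differentiable (at b)"
    "\<And>a b c. (a, b, c) \<in> U \<Longrightarrow> (\<lambda>t. g (a, b, t)) differentiable (at c)"
  using assms by (auto elim: smooth3.cases)

lemma line_deriv: "deriv (\<lambda>t. g (a, b, t)) = (\<lambda>t. Du g (a, b, t))"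
  by (simp add: Du_def)

lemma line_cn: "smooth3 U g \<Longrightarrow> cn {t. (a, b, t) \<in> U} n (\<lambda>t. g (a, b, t))"
proof (induction n arbitrary: g)
  case 0
  then show ?case using smooth3_D(6)[OF 0] by (auto simp: DERIV_deriv_iff_real_differentiable)
next
  case (Suc n)
  have "\<forall>t\<in>{t. (a, b, t) \<in> U}. ((\<lambda>t. g (a, b, t)) has_real_derivative deriv (\<lambda>t. g (a, b, t)) t) (at t)"
    using smooth3_D(6)[OF Suc.prems] by (auto simp: DERIV_deriv_iff_real_differentiable)
  moreover have "cn {t. (a, b, t) \<in> U} n (deriv (\<lambda>t. g (a, b, t)))"
    unfolding line_deriv by (rule Suc.IH[OF smooth3_D(3)[OF Suc.prems]])
  ultimately show ?case by simp
qed

lemma line_has: "smooth3 U g \<Longrightarrow> (a, b, t) \<in> U \<Longrightarrow> ((\<lambda>s. g (a, b, s)) has_real_derivative Du g (a, b, t)) (at t)"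
  using cn_D[OF line_cn[of U g a b 0], of t] by (simp add: line_deriv)

lemma Du_cong: "open U \<Longrightarrow> (a, b, c) \<in> U \<Longrightarrow> (\<And>q. q \<in> U \<Longrightarrow> g q = h q) \<Longrightarrow> Du g (a, b, c) = Du h (a, b, c)"
  by (simp add: Du_def) (rule deriv_congI[OF open_line3(1)], auto)

lemma D1_cong: "open U \<Longrightarrow> (a, b, c) \<in> U \<Longrightarrow> (\<And>q. q \<in> U \<Longrightarrow> g q = h q) \<Longrightarrow> D1 g (a, b, c) = D1 h (a, b, c)"
  by (simp add: D1_def) (rule deriv_congI[OF open_line3(2)], auto)

lemma D2_cong: "open U \<Longrightarrow> (a, b, c) \<in> U \<Longrightarrow> (\<And>q. q \<in> U \<Longrightarrow> g q = h q) \<Longrightarrow> D2 g (a, b, c) = D2 h (a, b, c)"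
  by (simp add: D2_def) (rule deriv_congI[OF open_line3(3)], auto)

lemma Du_conf: "(\<lambda>t. g (a, b, t)) differentiable (at c) \<Longrightarrow>
  Du (conf \<sigma> g) (a, b, c) = exp (\<sigma> (a, b)) * Du g (a, b, c)"
  unfolding Du_def conf_def
  by (simp, rule DERIV_imp_deriv) (auto intro!: derivative_eq_intros simp: DERIV_deriv_iff_real_differentiable[symmetric])

lemma D1_conf: "(\<lambda>t. g (t, b, c)) differentiable (at a) \<Longrightarrow> (\<lambda>t. \<sigma> (t, b)) differentiable (at a) \<Longrightarrow>
  D1 (conf \<sigma> g) (a, b, c) = exp (\<sigma> (a, b)) * (sig1 \<sigma> (a, b) * g (a, b, c) + D1 g (a, b, c))"
  unfolding D1_def conf_def sig1_def
  by (simp, rule DERIV_imp_deriv) (auto intro!: derivative_eq_intros simp: DERIV_deriv_iff_real_differentiable[symmetric] algebra_simps)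

lemma D2_conf: "(\<lambda>t. g (a, t, c)) differentiable (at b) \<Longrightarrow> (\<lambda>t. \<sigma> (a, t)) differentiable (at b) \<Longrightarrow>
  D2 (conf \<sigma> g) (a, b, c) = exp (\<sigma> (a, b)) * (sig2 \<sigma> (a, b) * g (a, b, c) + D2 g (a, b, c))"
  unfolding D2_def conf_def sig2_def
  by (simp, rule DERIV_imp_deriv) (auto intro!: derivative_eq_intros simp: DERIV_deriv_iff_real_differentiable[symmetric] algebra_simps)


lemma core:
  fixes Q0 Q1 Q2 Q3 P3 s1 s2 :: real
  assumes "Q1 \<noteq> 0"
  defines "P0 \<equiv> inverse Q1"
    and "P1 \<equiv> - Q2 / Q1^2"
    and "P2 \<equiv> - Q3 / Q1^2 + 2 * Q2^2 / Q1^3"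
  defines "X \<equiv> Q3 * P0 + 3 * Q2 * P1 + 3 * Q1 * P2 + Q0 * P3"
    and "Y1 \<equiv> Q1 * Q0 + Q0 * Q1"
    and "Y2 \<equiv> Q2 * Q0 + 2 * Q1 * Q1 + Q0 * Q2"
    and "Y3 \<equiv> Q3 * Q0 + 3 * Q2 * Q1 + 3 * Q1 * Q2 + Q0 * Q3"
  defines "Z \<equiv> Y3 * P0 + 3 * Y2 * P1 + 3 * Y1 * P2 + (Q0 * Q0) * P3"
  shows "((- s1 / 2) * Z + s2 / 2 * X) + Q0 * (s1 / 2 * X + (- s2 / 2) * P3)
    = (2 * s1 * Q0 * Q1 * Q3 - 3 * s1 * Q2^2 * Q0 - 2 * s2 * Q1 * Q3 + 3 * s2 * Q2^2) / (2 * Q1^2)"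
  using assms(1) unfolding assms(2-)
  by (simp add: field_simps) algebra

lemma alg1:
  fixes E F F1 F2 A B A1 B1 s1 s2 t :: real
  assumes "E \<noteq> 0" "F \<noteq> 0" "F2 \<noteq> 0"
  shows "((E * (s1 * F + A) + t * (E * (s2 * F + B))) * (E * F2)
      - (E * (s1 * F1 + A1) + t * (E * (s2 * F1 + B1)) - E * (s2 * F + B)) * (E * F1))
      / (2 * (E * F) * (E * F2))
    = ((A + t * B) * F2 - (A1 + t * B1 - B) * F1) / (2 * F * F2)
      + ((s1 + t * s2) * (F * F2 - F1^2) + s2 * F * F1) / (2 * F * F2)"
  using assms by (simp add: field_simps) algebra

lemma alg2:
  fixes E F F1 F2 A B A1 B1 s1 s2 t :: real
  assumes "E \<noteq> 0" "F \<noteq> 0" "F2 \<noteq> 0"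
  shows "(t * (E * (s1 * F + A) + t * (E * (s2 * F + B))) * (E * F2)
      + (E * (s1 * F1 + A1) + t * (E * (s2 * F1 + B1)) - E * (s2 * F + B)) * (E * F - t * (E * F1)))
      / (2 * (E * F) * (E * F2))
    = (t * (A + t * B) * F2 + (A1 + t * B1 - B) * (F - t * F1)) / (2 * F * F2)
      + ((s1 + t * s2) * (t * F * F2 + F1 * (F - t * F1)) - s2 * F * (F - t * F1)) / (2 * F * F2)"
  using assms by (simp add: field_simps)

lemma alg3a:
  fixes F F1 F2 s1 s2 t q q1 :: real
  assumes "F \<noteq> 0" "F2 \<noteq> 0" "F - t * F1 \<noteq> 0"
    and "q = F1 / (F - t * F1)" "q1 = F * F2 / (F - t * F1)^2"
  shows "((s1 + t * s2) * (F * F2 - F1^2) + s2 * F * F1) / (2 * F * F2)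
     = (s1 / 2 + s2 / 2 * t + 0 * (t * t)) + ((- s1 / 2) * (q * q * inverse q1) + s2 / 2 * (q * inverse q1))"
proof -
  define W where "W = F - t * F1"
  have W: "W \<noteq> 0" using assms by (simp add: W_def)
  have F: "F = W + t * F1" by (simp add: W_def)
  show ?thesis unfolding assms(4,5) W_def[symmetric] using assms(1,2) W
    apply (simp add: field_simps power2_eq_square)
    using F by algebra
qed

lemma alg3b:
  fixes F F1 F2 s1 s2 t q q1 :: real
  assumes "F \<noteq> 0" "F2 \<noteq> 0" "F - t * F1 \<noteq> 0"
    and "q = F1 / (F - t * F1)" "q1 = F * F2 / (F - t * F1)^2"
  shows "((s1 + t * s2) * (t * F * F2 + F1 * (F - t * F1)) - s2 * F * (F - t * F1)) / (2 * F * F2)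
     = (0 + s1 / 2 * t + s2 / 2 * (t * t)) + (s1 / 2 * (q * inverse q1) + (- s2 / 2) * inverse q1)"
proof -
  define W where "W = F - t * F1"
  have W: "W \<noteq> 0" using assms by (simp add: W_def)
  have F: "F = W + t * F1" by (simp add: W_def)
  show ?thesis unfolding assms(4,5) W_def[symmetric] using assms(1,2) W
    apply (simp add: field_simps power2_eq_square)
    using F by algebra
qed

lemma Du3_line: "Du (Du (Du g)) (a, b, c) = deriv (deriv (deriv (\<lambda>t. g (a, b, t)))) c"
  by (simp add: Du_def)

lemma comb: "(b::real) + q * d = r \<Longrightarrow> (a + b) + q * (c + d) = a + q * c + r"
  by (simp add: algebra_simps)

theorem proposition4p5:
  fixes f :: "real \<times> real \<times> real \<Rightarrow> real"
    and \<sigma> :: "real \<times> real \<Rightarrow> real"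
    and U :: "(real \<times> real \<times> real) set"
    and x1 x2 u :: real
  assumes U_open: "open U"
    and f_smooth: "smooth3 U f"
    and sigma_smooth: "smooth3 U (\<lambda>(a, b, c). \<sigma> (a, b))"
    and f_pos: "\<forall>p\<in>U. f p > 0"
    and f_conv: "\<forall>p\<in>U. Du (Du f) p \<noteq> 0"
    and f_nondeg: "\<forall>p\<in>U. f p - ucoord p * Du f p \<noteq> 0"
    and pt: "(x1, x2, u) \<in> U"
  shows
   "(let p = (x1, x2, u); fb = conf \<sigma> f; Q = Qf f p; Q1 = Du (Qf f) p;
         Q2 = Du (Du (Qf f)) p; Q3 = Du (Du (Du (Qf f))) p;
         s1 = sig1 \<sigma> (x1, x2); s2 = sig2 \<sigma> (x1, x2) in
     Du (Du (Du (f1 fb))) p + Qf fb p * Du (Du (Du (f2 fb))) p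
     = Du (Du (Du (f1 f))) p + Q * Du (Du (Du (f2 f))) p
       + (2 * s1 * Q * Q1 * Q3 - 3 * s1 * Q2^2 * Q - 2 * s2 * Q1 * Q3 + 3 * s2 * Q2^2)
         / (2 * Q1^2))"
proof -
  define L where "L = {t. (x1, x2, t) \<in> U}"
  have oL: "open L" unfolding L_def by (rule open_line3(1)[OF U_open])
  have uL: "u \<in> L" using pt by (simp add: L_def)
  have lc: "\<And>g n. smooth3 U g \<Longrightarrow> cn L n (\<lambda>t. g (x1, x2, t))" unfolding L_def by (rule line_cn)
  define s1 where "s1 = sig1 \<sigma> (x1, x2)"
  define s2 where "s2 = sig2 \<sigma> (x1, x2)"
  note fS = smooth3_D[OF f_smooth]
  note fuS = smooth3_D[OF smooth3_D(3)[OF f_smooth]]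
  have sg1: "\<And>a b c. (a, b, c) \<in> U \<Longrightarrow> (\<lambda>t. \<sigma> (t, b)) differentiable (at a)"
    using smooth3_D(4)[OF sigma_smooth] by simp
  have sg2: "\<And>a b c. (a, b, c) \<in> U \<Longrightarrow> (\<lambda>t. \<sigma> (a, t)) differentiable (at b)"
    using smooth3_D(5)[OF sigma_smooth] by simp
  let ?fb = "conf \<sigma> f"
  have E0: "\<And>a b c. ?fb (a, b, c) = exp (\<sigma> (a, b)) * f (a, b, c)" by (simp add: conf_def)
  have E1: "\<And>a b c. (a, b, c) \<in> U \<Longrightarrow> Du ?fb (a, b, c) = exp (\<sigma> (a, b)) * Du f (a, b, c)"
    by (rule Du_conf) (rule fS(6))
  have E1': "\<And>q. q \<in> U \<Longrightarrow> Du ?fb q = conf \<sigma> (Du f) q"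
  proof -
    fix q assume q: "q \<in> U"
    obtain a b c where qq: "q = (a, b, c)" by (cases q)
    show "Du ?fb q = conf \<sigma> (Du f) q" using E1[of a b c] q by (simp add: qq conf_def)
  qed
  have E2: "\<And>a b c. (a, b, c) \<in> U \<Longrightarrow> Du (Du ?fb) (a, b, c) = exp (\<sigma> (a, b)) * Du (Du f) (a, b, c)"
  proof -
    fix a b c assume abc: "(a, b, c) \<in> U"
    have "Du (Du ?fb) (a, b, c) = Du (conf \<sigma> (Du f)) (a, b, c)" by (rule Du_cong[OF U_open abc E1'])
    also have "\<dots> = exp (\<sigma> (a, b)) * Du (Du f) (a, b, c)"
      by (rule Du_conf) (rule fuS(6)[OF abc])
    finally show "?thesis a b c" .
  qed
  have E3: "\<And>a b c. (a, b, c) \<in> U \<Longrightarrow> D1 ?fb (a, b, c) = exp (\<sigma> (a, b)) * (sig1 \<sigma> (a, b) * f (a, b, c) + D1 f (a, b, c))"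
    by (rule D1_conf) (auto intro: fS(4) sg1)
  have E4: "\<And>a b c. (a, b, c) \<in> U \<Longrightarrow> D2 ?fb (a, b, c) = exp (\<sigma> (a, b)) * (sig2 \<sigma> (a, b) * f (a, b, c) + D2 f (a, b, c))"
    by (rule D2_conf) (auto intro: fS(5) sg2)
  have E5: "\<And>a b c. (a, b, c) \<in> U \<Longrightarrow> D1 (Du ?fb) (a, b, c) = exp (\<sigma> (a, b)) * (sig1 \<sigma> (a, b) * Du f (a, b, c) + D1 (Du f) (a, b, c))"
  proof -
    fix a b c assume abc: "(a, b, c) \<in> U"
    have "D1 (Du ?fb) (a, b, c) = D1 (conf \<sigma> (Du f)) (a, b, c)" by (rule D1_cong[OF U_open abc E1'])
    also have "\<dots> = exp (\<sigma> (a, b)) * (sig1 \<sigma> (a, b) * Du f (a, b, c) + D1 (Du f) (a, b, c))"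
      by (rule D1_conf) (auto intro: fuS(4) sg1 abc)
    finally show "?thesis a b c" .
  qed
  have E6: "\<And>a b c. (a, b, c) \<in> U \<Longrightarrow> D2 (Du ?fb) (a, b, c) = exp (\<sigma> (a, b)) * (sig2 \<sigma> (a, b) * Du f (a, b, c) + D2 (Du f) (a, b, c))"
  proof -
    fix a b c assume abc: "(a, b, c) \<in> U"
    have "D2 (Du ?fb) (a, b, c) = D2 (conf \<sigma> (Du f)) (a, b, c)" by (rule D2_cong[OF U_open abc E1'])
    also have "\<dots> = exp (\<sigma> (a, b)) * (sig2 \<sigma> (a, b) * Du f (a, b, c) + D2 (Du f) (a, b, c))"
      by (rule D2_conf) (auto intro: fuS(5) sg2 abc)
    finally show "?thesis a b c" .
  qed
  define F where "F = (\<lambda>t. f (x1, x2, t))"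
  define F1 where "F1 = (\<lambda>t. Du f (x1, x2, t))"
  define F2 where "F2 = (\<lambda>t. Du (Du f) (x1, x2, t))"
  have Fpos: "\<And>t. t \<in> L \<Longrightarrow> F t \<noteq> 0" using f_pos by (auto simp: L_def F_def less_imp_neq[symmetric])
  have F2nz: "\<And>t. t \<in> L \<Longrightarrow> F2 t \<noteq> 0" using f_conv by (auto simp: L_def F2_def)
  have Wnz: "\<And>t. t \<in> L \<Longrightarrow> F t - t * F1 t \<noteq> 0" using f_nondeg by (auto simp: L_def F_def F1_def ucoord_def)
  define q where "q = (\<lambda>t. Qf f (x1, x2, t))"
  have q_eq: "q = (\<lambda>t. F1 t / (F t - t * F1 t))"
    by (simp add: q_def Qf_def ucoord_def F_def F1_def)
  have hF: "\<And>t. t \<in> L \<Longrightarrow> (F has_real_derivative F1 t) (at t)"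
    unfolding F_def F1_def L_def by (rule line_has[OF f_smooth]) simp
  have hF1: "\<And>t. t \<in> L \<Longrightarrow> (F1 has_real_derivative F2 t) (at t)"
    unfolding F2_def F1_def L_def by (rule line_has[OF fS(3)]) simp
  have dq: "\<And>t. t \<in> L \<Longrightarrow> deriv q t = F t * F2 t / (F t - t * F1 t)^2"
  proof -
    fix t assume t: "t \<in> L"
    show "deriv q t = F t * F2 t / (F t - t * F1 t)^2"
      unfolding q_eq
      using DERIV_imp_deriv[OF DERIV_divide[OF hF1[OF t] DERIV_diff[OF hF[OF t] DERIV_mult[OF DERIV_ident hF1[OF t]]] Wnz[OF t]]]
        Wnz[OF t]
      by (simp add: field_simps power2_eq_square)
  qed
  have qt: "\<And>t. t \<in> L \<Longrightarrow> q t = F1 t / (F t - t * F1 t)" by (simp add: q_eq)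
  have q1nz: "\<And>t. t \<in> L \<Longrightarrow> deriv q t \<noteq> 0"
    using dq Fpos F2nz Wnz by simp
  have cF: "\<And>n. cn L n F" unfolding F_def by (rule lc[OF f_smooth])
  have cF1: "\<And>n. cn L n F1" unfolding F1_def by (rule lc[OF fS(3)])
  have cq: "\<And>n. cn L n q" unfolding q_eq
    by (intro cn_divide cn_diff cn_mult cn_id oL cF cF1) (use Wnz in auto)
  have cq2: "cn L 2 q" by (rule cq)
  have cq1: "cn L 2 (deriv q)" by (rule cn_deriv[OF cq])
  define P where "P = (\<lambda>t. inverse (deriv q t))"
  have cP: "cn L 2 P" unfolding P_def by (rule cn_inverse[OF oL cq1 q1nz])
  have cphi1: "cn L 2 (\<lambda>t. f1 f (x1, x2, t))"
    unfolding f1_def Let_def ucoord_def snd_conv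
    apply (intro cn_divide cn_diff cn_add cn_mult cn_const cn_id oL lc[OF f_smooth] lc[OF fS(1)] lc[OF fS(2)]
       lc[OF fS(3)] lc[OF fuS(1)] lc[OF fuS(2)] lc[OF fuS(3)])
    using Fpos F2nz unfolding F_def F2_def by auto
  have cphi2: "cn L 2 (\<lambda>t. f2 f (x1, x2, t))"
    unfolding f2_def Let_def ucoord_def snd_conv
    apply (intro cn_divide cn_diff cn_add cn_mult cn_const cn_id oL lc[OF f_smooth] lc[OF fS(1)] lc[OF fS(2)]
       lc[OF fS(3)] lc[OF fuS(1)] lc[OF fuS(2)] lc[OF fuS(3)])
    using Fpos F2nz unfolding F_def F2_def by auto
  define A where "A = (\<lambda>t. D1 f (x1, x2, t))"
  define B where "B = (\<lambda>t. D2 f (x1, x2, t))"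
  define A1 where "A1 = (\<lambda>t. D1 (Du f) (x1, x2, t))"
  define B1 where "B1 = (\<lambda>t. D2 (Du f) (x1, x2, t))"
  define e where "e = exp (\<sigma> (x1, x2))"
  have enz: "e \<noteq> 0" by (simp add: e_def)
  define G1 where "G1 = (\<lambda>t. (s1 / 2 + s2 / 2 * t + 0 * (t * t)) + ((- s1 / 2) * (q t * q t * P t) + s2 / 2 * (q t * P t)))"
  define G2 where "G2 = (\<lambda>t. (0 + s1 / 2 * t + s2 / 2 * (t * t)) + (s1 / 2 * (q t * P t) + (- s2 / 2) * P t))"
  have K1: "\<And>t. t \<in> L \<Longrightarrow> f1 ?fb (x1, x2, t) = f1 f (x1, x2, t) + G1 t"
  proof -
    fix t assume t: "t \<in> L"
    have tU: "(x1, x2, t) \<in> U" using t by (simp add: L_def)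
    have "f1 ?fb (x1, x2, t) = ((e * (s1 * F t + A t) + t * (e * (s2 * F t + B t))) * (e * F2 t)
      - (e * (s1 * F1 t + A1 t) + t * (e * (s2 * F1 t + B1 t)) - e * (s2 * F t + B t)) * (e * F1 t))
      / (2 * (e * F t) * (e * F2 t))"
      unfolding f1_def Let_def ucoord_def snd_conv E0 E1[OF tU] E2[OF tU] E3[OF tU] E4[OF tU] E5[OF tU] E6[OF tU]
      by (simp add: e_def s1_def s2_def F_def F1_def F2_def A_def B_def A1_def B1_def)
    also have "\<dots> = ((A t + t * B t) * F2 t - (A1 t + t * B1 t - B t) * F1 t) / (2 * F t * F2 t)
      + ((s1 + t * s2) * (F t * F2 t - (F1 t)^2) + s2 * F t * F1 t) / (2 * F t * F2 t)"
      by (rule alg1[OF enz Fpos[OF t] F2nz[OF t]])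
    also have "((A t + t * B t) * F2 t - (A1 t + t * B1 t - B t) * F1 t) / (2 * F t * F2 t) = f1 f (x1, x2, t)"
      by (simp add: f1_def ucoord_def F_def F1_def F2_def A_def B_def A1_def B1_def)
    also have "((s1 + t * s2) * (F t * F2 t - (F1 t)^2) + s2 * F t * F1 t) / (2 * F t * F2 t) = G1 t"
      unfolding G1_def P_def
      by (rule alg3a[OF Fpos[OF t] F2nz[OF t] Wnz[OF t]]) (simp_all only: dq[OF t] qt[OF t])
    finally show "f1 ?fb (x1, x2, t) = f1 f (x1, x2, t) + G1 t" .
  qed
  have K2: "\<And>t. t \<in> L \<Longrightarrow> f2 ?fb (x1, x2, t) = f2 f (x1, x2, t) + G2 t"
  proof -
    fix t assume t: "t \<in> L"
    have tU: "(x1, x2, t) \<in> U" using t by (simp add: L_def)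
    have "f2 ?fb (x1, x2, t) = (t * (e * (s1 * F t + A t) + t * (e * (s2 * F t + B t))) * (e * F2 t)
      + (e * (s1 * F1 t + A1 t) + t * (e * (s2 * F1 t + B1 t)) - e * (s2 * F t + B t)) * (e * F t - t * (e * F1 t)))
      / (2 * (e * F t) * (e * F2 t))"
      unfolding f2_def Let_def ucoord_def snd_conv E0 E1[OF tU] E2[OF tU] E3[OF tU] E4[OF tU] E5[OF tU] E6[OF tU]
      by (simp add: e_def s1_def s2_def F_def F1_def F2_def A_def B_def A1_def B1_def)
    also have "\<dots> = (t * (A t + t * B t) * F2 t + (A1 t + t * B1 t - B t) * (F t - t * F1 t)) / (2 * F t * F2 t)
      + ((s1 + t * s2) * (t * F t * F2 t + F1 t * (F t - t * F1 t)) - s2 * F t * (F t - t * F1 t)) / (2 * F t * F2 t)"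
      by (rule alg2[OF enz Fpos[OF t] F2nz[OF t]])
    also have "(t * (A t + t * B t) * F2 t + (A1 t + t * B1 t - B t) * (F t - t * F1 t)) / (2 * F t * F2 t) = f2 f (x1, x2, t)"
      by (simp add: f2_def ucoord_def F_def F1_def F2_def A_def B_def A1_def B1_def)
    also have "((s1 + t * s2) * (t * F t * F2 t + F1 t * (F t - t * F1 t)) - s2 * F t * (F t - t * F1 t)) / (2 * F t * F2 t) = G2 t"
      unfolding G2_def P_def
      by (rule alg3b[OF Fpos[OF t] F2nz[OF t] Wnz[OF t]]) (simp_all only: dq[OF t] qt[OF t])
    finally show "f2 ?fb (x1, x2, t) = f2 f (x1, x2, t) + G2 t" .
  qed
  have cqq: "cn L 2 (\<lambda>t. q t * q t)" by (intro cn_mult cq2 oL)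
  have cqP: "cn L 2 (\<lambda>t. q t * P t)" by (intro cn_mult cq2 cP oL)
  have cqqP: "cn L 2 (\<lambda>t. q t * q t * P t)" by (intro cn_mult cq2 cP oL)
  have cG1: "cn L 2 G1" unfolding G1_def by (intro cn_add cn_mult cn_const cn_id oL cq2 cP)
  have cG2: "cn L 2 G2" unfolding G2_def by (intro cn_add cn_mult cn_const cn_id oL cq2 cP)
  have LHS1: "deriv (deriv (deriv (\<lambda>t. f1 ?fb (x1, x2, t)))) u
     = deriv (deriv (deriv (\<lambda>t. f1 f (x1, x2, t)))) u
       + ((- s1 / 2) * deriv (deriv (deriv (\<lambda>t. q t * q t * P t))) u
          + s2 / 2 * deriv (deriv (deriv (\<lambda>t. q t * P t))) u)"
  proof -
    have "deriv (deriv (deriv (\<lambda>t. f1 ?fb (x1, x2, t)))) u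
        = deriv (deriv (deriv (\<lambda>t. f1 f (x1, x2, t) + G1 t))) u"
      by (rule d3_cong[OF oL uL K1])
    also have "\<dots> = deriv (deriv (deriv (\<lambda>t. f1 f (x1, x2, t)))) u + deriv (deriv (deriv G1)) u"
      by (rule d3_add[OF oL cphi1 cG1 uL])
    also have "deriv (deriv (deriv G1)) u = (- s1 / 2) * deriv (deriv (deriv (\<lambda>t. q t * q t * P t))) u
          + s2 / 2 * deriv (deriv (deriv (\<lambda>t. q t * P t))) u"
      unfolding G1_def by (rule lin3[OF oL cqqP cqP uL])
    finally show ?thesis .
  qed
  have LHS2: "deriv (deriv (deriv (\<lambda>t. f2 ?fb (x1, x2, t)))) u
     = deriv (deriv (deriv (\<lambda>t. f2 f (x1, x2, t)))) u
       + (s1 / 2 * deriv (deriv (deriv (\<lambda>t. q t * P t))) u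
          + (- s2 / 2) * deriv (deriv (deriv P)) u)"
  proof -
    have "deriv (deriv (deriv (\<lambda>t. f2 ?fb (x1, x2, t)))) u
        = deriv (deriv (deriv (\<lambda>t. f2 f (x1, x2, t) + G2 t))) u"
      by (rule d3_cong[OF oL uL K2])
    also have "\<dots> = deriv (deriv (deriv (\<lambda>t. f2 f (x1, x2, t)))) u + deriv (deriv (deriv G2)) u"
      by (rule d3_add[OF oL cphi2 cG2 uL])
    also have "deriv (deriv (deriv G2)) u = s1 / 2 * deriv (deriv (deriv (\<lambda>t. q t * P t))) u
          + (- s2 / 2) * deriv (deriv (deriv P)) u"
      unfolding G2_def by (rule lin3[OF oL cqP cP uL])
    finally show ?thesis .
  qed
  have h1: "\<And>t. t \<in> L \<Longrightarrow> (deriv q has_real_derivative deriv (deriv q) t) (at t)"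
    by (rule cn_D[OF cq1])
  have h2: "\<And>t. t \<in> L \<Longrightarrow> (deriv (deriv q) has_real_derivative deriv (deriv (deriv q)) t) (at t)"
    by (rule cn_D[OF cn_deriv[OF cn_deriv[OF cq]]])
  have hP: "\<And>t. t \<in> L \<Longrightarrow> (P has_real_derivative - deriv (deriv q) t * (P t * P t)) (at t)"
  proof -
    fix t assume t: "t \<in> L"
    have eq: "- (deriv (deriv q) t * inverse (deriv q t ^ Suc (Suc 0))) = - deriv (deriv q) t * (P t * P t)"
      by (simp add: P_def inverse_mult_distrib)
    show "(P has_real_derivative - deriv (deriv q) t * (P t * P t)) (at t)"
      using DERIV_inverse_fun[OF h1[OF t] q1nz[OF t], folded P_def] unfolding eq .
  qed
  have dP: "\<And>t. t \<in> L \<Longrightarrow> deriv P t = - deriv (deriv q) t * (P t * P t)"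
    by (rule DERIV_imp_deriv[OF hP])
  have ddP: "deriv (deriv P) u = - deriv (deriv (deriv q)) u * (P u * P u)
      + - deriv (deriv q) u * ((- deriv (deriv q) u * (P u * P u)) * P u + (- deriv (deriv q) u * (P u * P u)) * P u)"
  proof -
    have "deriv (deriv P) u = deriv (\<lambda>t. - deriv (deriv q) t * (P t * P t)) u"
      by (rule deriv_congI[OF oL uL dP])
    also have "\<dots> = - deriv (deriv (deriv q)) u * (P u * P u)
      + - deriv (deriv q) u * ((- deriv (deriv q) u * (P u * P u)) * P u + (- deriv (deriv q) u * (P u * P u)) * P u)"
      by (rule DERIV_imp_deriv[OF DERIV_mult[OF DERIV_minus[OF h2[OF uL]] DERIV_mult[OF hP[OF uL] hP[OF uL]]], THEN trans])
        (simp add: algebra_simps)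
    finally show ?thesis .
  qed
  define Q0 where "Q0 = q u"
  define Q1 where "Q1 = deriv q u"
  define Q2 where "Q2 = deriv (deriv q) u"
  define Q3 where "Q3 = deriv (deriv (deriv q)) u"
  define P3 where "P3 = deriv (deriv (deriv P)) u"
  have Q1nz: "Q1 \<noteq> 0" unfolding Q1_def by (rule q1nz[OF uL])
  have Pu: "P u = inverse Q1" by (simp add: P_def Q1_def)
  have dPu: "deriv P u = - Q2 / Q1^2"
    using dP[OF uL] Q1nz by (simp add: Pu Q2_def field_simps power2_eq_square)
  have ddPu: "deriv (deriv P) u = - Q3 / Q1^2 + 2 * Q2^2 / Q1^3"
    using ddP Q1nz by (simp add: Pu Q2_def Q3_def field_simps power2_eq_square power3_eq_cube)
  note lq = leib[OF oL cq2 cq2 uL]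
  note lqP = leib[OF oL cq2 cP uL]
  note lqqP = leib[OF oL cqq cP uL]
  have Xv: "deriv (deriv (deriv (\<lambda>t. q t * P t))) u
      = Q3 * inverse Q1 + 3 * Q2 * (- Q2 / Q1^2) + 3 * Q1 * (- Q3 / Q1^2 + 2 * Q2^2 / Q1^3) + Q0 * P3"
    using lqP(3) unfolding Pu dPu ddPu Q0_def Q1_def Q2_def Q3_def P3_def .
  have Zv: "deriv (deriv (deriv (\<lambda>t. q t * q t * P t))) u
      = (Q3 * Q0 + 3 * Q2 * Q1 + 3 * Q1 * Q2 + Q0 * Q3) * inverse Q1
        + 3 * (Q2 * Q0 + 2 * Q1 * Q1 + Q0 * Q2) * (- Q2 / Q1^2)
        + 3 * (Q1 * Q0 + Q0 * Q1) * (- Q3 / Q1^2 + 2 * Q2^2 / Q1^3) + Q0 * Q0 * P3"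
    using lqqP(3) unfolding lq Pu dPu ddPu Q0_def Q1_def Q2_def Q3_def P3_def .
  have Cv: "((- s1 / 2) * deriv (deriv (deriv (\<lambda>t. q t * q t * P t))) u
          + s2 / 2 * deriv (deriv (deriv (\<lambda>t. q t * P t))) u)
      + Q0 * (s1 / 2 * deriv (deriv (deriv (\<lambda>t. q t * P t))) u
          + (- s2 / 2) * deriv (deriv (deriv P)) u)
     = (2 * s1 * Q0 * Q1 * Q3 - 3 * s1 * Q2^2 * Q0 - 2 * s2 * Q1 * Q3 + 3 * s2 * Q2^2) / (2 * Q1^2)"
    unfolding Xv Zv P3_def[symmetric] by (rule core[OF Q1nz])
  have hQb: "Qf ?fb (x1, x2, u) = q u"
    using Wnz[OF uL] enz
    by (simp add: Qf_def ucoord_def E0 E1[OF pt] q_eq e_def F_def F1_def field_simps)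
  have hQ1: "Du (Qf f) (x1, x2, u) = Q1" by (simp add: Du_def Q1_def q_def)
  have hQ2: "Du (Du (Qf f)) (x1, x2, u) = Q2" by (simp add: Du_def Q2_def q_def)
  have hQ3: "Du (Du (Du (Qf f))) (x1, x2, u) = Q3" by (simp add: Du3_line Q3_def q_def)
  have hQ0: "Qf f (x1, x2, u) = Q0" by (simp add: Q0_def q_def)
  show ?thesis
    unfolding Let_def hQ3 hQ2 hQ1 hQ0 hQb s1_def[symmetric] s2_def[symmetric]
    unfolding Du3_line LHS1 LHS2
    unfolding Q0_def[symmetric]
    by (rule comb[OF Cv])
qed

end
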